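(* Let $\ell$ be an odd prime. Then, as $T\to\infty$, $$|S^1(\ell,T)| \ll T,$$ where the implied constant may depend on $\ell$.
   Context: $\Phi_\ell(X)$ denotes the $\ell$-th cyclotomic polynomial. For a natural number $n$, $R_\ell(n):=\min\{d\in\mathbb{N}: n\mid \Phi_\ell(d)\}$ if such $d$ exists, and $R_\ell(n)=\infty$ otherwise. $\mathbb{P}$ denotes the set of primes $p$ that divide $\Phi_\ell(d)$ for some $d\in\mathbb{N}$. For a positive integer $i$ and real $T$, $S^i(\ell,T):=\{p\in\mathbb{P}: R_\ell(p^i)\le T\}$. *)

theory Defs
  imports "HOL-Analysis.Analysis" "HOL-Computational_Algebra.Polynomial" "HOL-Library.Extended_Nat"
begin

definition cyclotomic :: "nat \<Rightarrow> complex poly" where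
  "cyclotomic n = (\<Prod>k\<in>{k\<in>{1..n}. coprime k n}. [:- cis (2 * pi * real k / real n), 1:])"

definition cyc_dvd :: "nat \<Rightarrow> nat \<Rightarrow> nat \<Rightarrow> bool" where
  "cyc_dvd l n d \<longleftrightarrow> (\<exists>m::int. poly (cyclotomic l) (of_nat d) = of_int (int n * m))"

definition R :: "nat \<Rightarrow> nat \<Rightarrow> enat" where
  "R l n = (if \<exists>d. d \<ge> 1 \<and> cyc_dvd l n d
            then enat (LEAST d. d \<ge> 1 \<and> cyc_dvd l n d) else \<infinity>)"

definition PP :: "nat \<Rightarrow> nat set" where
  "PP l = {p. prime p \<and> (\<exists>d. d \<ge> 1 \<and> cyc_dvd l p d)}"

definition S :: "nat \<Rightarrow> nat \<Rightarrow> real \<Rightarrow> nat set" where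
  "S i l T = {p \<in> PP l. R l (p ^ i) \<noteq> \<infinity> \<and> real (the_enat (R l (p ^ i))) \<le> T}"

end

theory Submission imports Defs "HOL-Computational_Algebra.Primes" begin

lemma geo_poly: "(\<Sum>j<n. monom (1::'a::comm_ring_1) j) * [:-1,1:] = monom 1 n - 1"
proof (induction n)
  case 0 then show ?case by simp
next
  case (Suc n)
  have e: "monom (1::'a) n * [:-1,1:] = monom 1 (Suc n) - monom 1 n"
    by (simp add: monom_Suc)
  have "(\<Sum>j<Suc n. monom (1::'a) j) * [:-1,1:] = (\<Sum>j<n. monom 1 j) * [:-1,1:] + monom 1 n * [:-1,1:]"
    by (simp only: sum.lessThan_Suc distrib_right)
  also have "\<dots> = monom 1 (Suc n) - 1" unfolding e Suc.IH by simp
  finally show ?case .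
qed

lemma cyc_prime:
  assumes "prime l"
  shows "cyclotomic l = (\<Sum>j<l. monom 1 j)"
proof -
  have l1: "l > 1" using assms prime_gt_1_nat by blast
  have set_eq: "{k\<in>{1..l}. coprime k l} = {1..<l}"
  proof safe
    fix k assume "k \<in> {1..l}" "coprime k l"
    then show "k \<in> {1..<l}" using l1 by (cases "k = l") auto
  next
    fix k assume "k \<in> {1..<l}"
    then have "\<not> l dvd k" by (auto dest: dvd_imp_le)
    then show "coprime k l" using assms prime_imp_coprime coprime_commute by blast
  qed auto
  define p where "p = cyclotomic l * [:-1,1:]"
  define q where "q = (monom (1::complex) l - 1)"
  have dprod: "degree (cyclotomic l) = l - 1"
    unfolding cyclotomic_def set_eq
    by (subst degree_prod_eq_sum_degree) auto
  have lprod: "lead_coeff (cyclotomic l) = 1"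
    unfolding cyclotomic_def set_eq by (simp add: lead_coeff_prod)
  have cnz: "cyclotomic l \<noteq> 0" using lprod by auto
  have "p = q"
  proof (rule poly_eqI_degree_lead_coeff[where n = l and A = "{z. z ^ l = 1}"])
    have "degree p = l" unfolding p_def using dprod cnz l1 by (simp add: degree_mult_eq del: mult_pCons_right)
    moreover have "lead_coeff p = 1" unfolding p_def using lprod by (simp only: lead_coeff_mult) simp
    ultimately show "poly.coeff p l = poly.coeff q l" unfolding q_def using l1 by (simp add: coeff_monom)
    show "l \<le> card {z::complex. z ^ l = 1}" using card_roots_unity_eq l1 by simp
    show "degree p \<le> l" unfolding p_def using dprod cnz l1 by (simp add: degree_mult_eq del: mult_pCons_right)
    show "degree q \<le> l" unfolding q_def by (rule degree_diff_le) (auto simp: degree_monom_eq)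
    fix z :: complex assume "z \<in> {z. z ^ l = 1}"
    then obtain k where k: "k < l" "z = cis (2 * pi * real k / real l)"
      using Complex.bij_betw_roots_unity[of l] l1 unfolding bij_betw_def by (metis (no_types, lifting) imageE lessThan_iff zero_less_one order.strict_trans)
    show "poly p z = poly q z"
    proof (cases "k = 0")
      case True then show ?thesis using k l1 unfolding p_def q_def by (simp add: poly_monom)
    next
      case False
      have "poly (cyclotomic l) z = 0"
        unfolding cyclotomic_def set_eq poly_prod using k False
        by (subst prod_zero_iff) auto
      then show ?thesis using \<open>z \<in> {z. z ^ l = 1}\<close> unfolding p_def q_def by (simp add: poly_monom)
    qed
  qed
  then have "cyclotomic l * [:-1,1:] = (\<Sum>j<l. monom 1 j) * [:-1,1:]"
    unfolding p_def q_def geo_poly by simp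
  then show ?thesis by (subst (asm) mult_right_cancel) auto
qed

definition G :: "nat \<Rightarrow> nat \<Rightarrow> nat" where "G l d = (\<Sum>j<l. d ^ j)"

lemma cyc_dvd_iff:
  assumes "prime l" shows "cyc_dvd l n d \<longleftrightarrow> n dvd G l d"
proof -
  have "poly (cyclotomic l) (of_nat d) = of_nat (G l d)"
    unfolding cyc_prime[OF assms] G_def by (simp add: poly_sum poly_monom)
  then have "cyc_dvd l n d \<longleftrightarrow> (\<exists>m::int. int (G l d) = int n * m)"
    unfolding cyc_dvd_def by (metis of_int_eq_iff of_int_of_nat_eq)
  also have "\<dots> \<longleftrightarrow> int n dvd int (G l d)" by (auto simp: dvd_def)
  finally show ?thesis by simp
qed

lemma G_cong: "G l d mod p = G l (d mod p) mod p"
proof -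
  have "G l d mod p = (\<Sum>j<l. d ^ j mod p) mod p" unfolding G_def by (simp add: mod_sum_eq)
  also have "\<dots> = (\<Sum>j<l. (d mod p) ^ j mod p) mod p" by (simp add: power_mod)
  also have "\<dots> = G l (d mod p) mod p" unfolding G_def by (simp add: mod_sum_eq)
  finally show ?thesis .
qed

lemma G_0: "l > 0 \<Longrightarrow> G l 0 = 1"
  unfolding G_def by (cases l) (simp_all add: sum.lessThan_Suc_shift del: sum.lessThan_Suc)

lemma R_props:
  assumes "prime l" "prime p" "R l p \<noteq> \<infinity>"
  defines "d \<equiv> the_enat (R l p)"
  shows "1 \<le> d \<and> d < p \<and> p dvd G l d"
proof -
  have ex: "\<exists>d. d \<ge> 1 \<and> cyc_dvd l p d" using assms(3) unfolding R_def by (auto split: if_splits)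
  then have dd: "d = (LEAST d. d \<ge> 1 \<and> cyc_dvd l p d)" unfolding d_def R_def by simp
  have P: "d \<ge> 1 \<and> p dvd G l d" unfolding dd using LeastI_ex[OF ex] cyc_dvd_iff[OF assms(1)] by blast
  have l0: "l > 0" using assms(1) prime_gt_0_nat by blast
  have "p dvd G l (d mod p)" using P G_cong[of l d p] by (simp add: mod_eq_0_iff_dvd[symmetric])
  moreover have "d mod p \<noteq> 0"
  proof
    assume "d mod p = 0"
    then have "p dvd 1" using \<open>p dvd G l (d mod p)\<close> G_0[OF l0] by simp
    then show False using assms(2) by simp
  qed
  ultimately have "d \<le> d mod p" unfolding dd
    using cyc_dvd_iff[OF assms(1)] by (intro Least_le) simp
  moreover have "d mod p < p" using prime_gt_0_nat[OF assms(2)] by simp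
  ultimately have "d < p" by linarith
  with P show ?thesis by simp
qed

lemma prod_primes_dvd:
  "finite A \<Longrightarrow> (\<forall>p\<in>A. prime (p::nat) \<and> p dvd n) \<Longrightarrow> \<Prod>A dvd n"
proof (induction A rule: finite_induct)
  case empty then show ?case by simp
next
  case (insert p A)
  have "coprime p (\<Prod>A)"
  proof (rule prime_imp_coprime)
    show "prime p" using insert by simp
    show "\<not> p dvd \<Prod>A"
    proof
      assume "p dvd \<Prod>A"
      then obtain q where "q \<in> A" "p dvd q" using prime_dvd_prod_iff[of A p id] insert by auto
      then have "p = q" using insert by (simp add: primes_dvd_imp_eq)
      then show False using insert \<open>q \<in> A\<close> by simp
    qed
  qed
  then show ?case using insert by (simp add: divides_mult)
qed

lemma G_lt: "d \<ge> 1 \<Longrightarrow> G l d < (d+1) ^ l"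
proof (induction l)
  case 0 then show ?case by (simp add: G_def)
next
  case (Suc l)
  have "G (Suc l) d = G l d + d ^ l" by (simp add: G_def)
  also have "\<dots> < (d+1)^l + d ^ l" using Suc by simp
  also have "d ^ l \<le> d * (d+1)^l"
  proof -
    have "d ^ l \<le> (d+1)^l" by (simp add: power_mono)
    also have "\<dots> \<le> d * (d+1)^l" using Suc.prems by simp
    finally show ?thesis .
  qed
  finally show ?case by simp
qed

lemma card_bound:
  assumes "d \<ge> 1" "l > 0"
  shows "finite {p. prime p \<and> d < p \<and> p dvd G l d} \<and> card {p. prime p \<and> d < p \<and> p dvd G l d} \<le> l"
proof -
  let ?A = "{p. prime p \<and> d < p \<and> p dvd G l d}"
  have "d ^ 0 \<le> (\<Sum>j<l. d ^ j)" by (rule member_le_sum) (use assms in auto)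
  then have Gpos: "G l d > 0" unfolding G_def by simp
  have sub: "?A \<subseteq> {..G l d}"
  proof
    fix p assume "p \<in> ?A"
    then have "p dvd G l d" by simp
    then show "p \<in> {..G l d}" using dvd_imp_le Gpos by simp
  qed
  have fin: "finite ?A" by (rule finite_subset[OF sub]) simp
  have "(\<Prod>p\<in>?A. d+1) \<le> (\<Prod>p\<in>?A. p)"
    by (rule prod_mono) (simp add: Suc_le_eq)
  then have "(d+1) ^ card ?A \<le> \<Prod>?A" by simp
  also have "\<Prod>?A dvd G l d" by (rule prod_primes_dvd[OF fin]) simp
  then have "\<Prod>?A \<le> G l d" using Gpos by (rule dvd_imp_le)
  also have "\<dots> < (d+1)^l" using G_lt[OF assms(1)] .
  finally have "card ?A < l" using assms by (subst (asm) power_strict_increasing_iff) auto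
  with fin show ?thesis by simp
qed

theorem theorem1:
  fixes l :: nat
  assumes "prime l" and "odd l"
  shows "\<exists>C::real. \<forall>\<^sub>F T in at_top.
           finite (S 1 l T) \<and> real (card (S 1 l T)) \<le> C * T"
proof (intro exI[of _ "real l"] eventually_at_top_linorderI[of 1] allI impI)
  fix T :: real assume T: "T \<ge> 1"
  have l0: "l > 0" using assms(1) prime_gt_0_nat by blast
  define A where "A d = {p. prime p \<and> d < p \<and> p dvd G l d}" for d
  define N where "N = nat \<lfloor>T\<rfloor>"
  have sub: "S 1 l T \<subseteq> (\<Union>d\<in>{1..N}. A d)"
  proof
    fix p assume "p \<in> S 1 l T"
    then have p: "prime p" "R l p \<noteq> \<infinity>" "real (the_enat (R l p)) \<le> T"
      unfolding S_def PP_def by auto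
    define d where "d = the_enat (R l p)"
    have "1 \<le> d \<and> d < p \<and> p dvd G l d" unfolding d_def by (rule R_props[OF assms(1) p(1,2)])
    moreover have "d \<le> N" unfolding N_def using p(3) d_def by linarith
    ultimately show "p \<in> (\<Union>d\<in>{1..N}. A d)" unfolding A_def using p(1) by auto
  qed
  have finA: "\<And>d. d \<in> {1..N} \<Longrightarrow> finite (A d) \<and> card (A d) \<le> l"
    unfolding A_def using card_bound l0 by simp
  have fin: "finite (\<Union>d\<in>{1..N}. A d)" using finA by auto
  have "card (S 1 l T) \<le> card (\<Union>d\<in>{1..N}. A d)" by (rule card_mono[OF fin sub])
  also have "\<dots> \<le> (\<Sum>d\<in>{1..N}. card (A d))" by (rule card_UN_le) simp
  also have "\<dots> \<le> (\<Sum>d\<in>{1..N}. l)" by (rule sum_mono) (use finA in blast)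
  also have "\<dots> = l * N" by simp
  finally have "real (card (S 1 l T)) \<le> real l * real N" by (metis of_nat_le_iff of_nat_mult)
  also have "real N \<le> T" unfolding N_def using T by linarith
  then have "real l * real N \<le> real l * T" by (simp add: mult_left_mono)
  finally show "finite (S 1 l T) \<and> real (card (S 1 l T)) \<le> real l * T"
    using finite_subset[OF sub fin] by simp
qed
end
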